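(* $w^\ast(3,3)\ge 414$. More precisely, the 3-coloring of $\{1,\dots,413\}$ in which the color of $n$ is the $n$-th letter of the following word (the concatenation of the six lines, of lengths $70,70,70,70,70,63$) contains no monochromatic double 3-term arithmetic progression: 0101102210100201200100221221010010220010112011211202210112122112202210 0110010220201122022002202001012212112122001001120121100110020022002110 2001101001121120210020011210201121122112122010110100110102201220201221 1210021122112122112200110011212200202202001212212112212200110010110012 0211212200220100112202200220200122102212211211002101220022001001100221 211010010110020022110010110010221211020220200220221001122011211
   Context: An increasing sequence of positive integers $a_1<a_2<\cdots$ (finite or infinite) contains a double 3-term arithmetic progression if there are indices $i<j<k$ with $i+k=2j$ and $a_i+a_k=2a_j$. For a coloring of an interval, each color class is regarded as an increasing sequence by listing its elements in increasing order; a monochromatic double 3-term arithmetic progression is a double 3-term arithmetic progression in some color class. $w^\ast(r,3)$ denotes the least integer $N$, if it exists, such that every $r$-coloring of $\{1,\dots,N\}$ has a monochromatic double 3-term arithmetic progression; $w^\ast(3,3)\ge414$ means that either it does not exist or it is at least $414$. *)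

theory Defs
  imports Main
begin

definition has_double_3AP :: "nat list \<Rightarrow> bool" where
  "has_double_3AP xs \<longleftrightarrow>
     (\<exists>i j k. i < j \<and> j < k \<and> k < length xs \<and> i + k = 2 * j \<and>
              xs ! i + xs ! k = 2 * xs ! j)"

definition color_class :: "(nat \<Rightarrow> nat) \<Rightarrow> nat \<Rightarrow> nat \<Rightarrow> nat list" where
  "color_class c N a = sorted_list_of_set {n \<in> {1..N}. c n = a}"

definition mono_double_3AP :: "(nat \<Rightarrow> nat) \<Rightarrow> nat \<Rightarrow> bool" where
  "mono_double_3AP c N \<longleftrightarrow> (\<exists>a. has_double_3AP (color_class c N a))"

definition is_coloring :: "nat \<Rightarrow> nat \<Rightarrow> (nat \<Rightarrow> nat) \<Rightarrow> bool" where
  "is_coloring r N c \<longleftrightarrow> (\<forall>n \<in> {1..N}. c n < r)"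

definition word413 :: string where
  "word413 =
     ''0101102210100201200100221221010010220010112011211202210112122112202210'' @
     ''0110010220201122022002202001012212112122001001120121100110020022002110'' @
     ''2001101001121120210020011210201121122112122010110100110102201220201221'' @
     ''1210021122112122112200110011212200202202001212212112212200110010110012'' @
     ''0211212200220100112202200220200122102212211211002101220022001001100221'' @
     ''211010010110020022110010110010221211020220200220221001122011211''"

definition col413 :: "nat \<Rightarrow> nat" where
  "col413 n = of_char (word413 ! (n - 1)) - 48"

end

theory Submission
  imports Defs
begin

fun chkf :: "nat list \<Rightarrow> nat list \<Rightarrow> nat \<Rightarrow> bool" where
  "chkf (x#ls) (y#rs) m = (x + y \<noteq> 2*m \<and> chkf ls rs m)"
| "chkf _ _ _ = True"

fun chkg :: "nat list \<Rightarrow> nat list \<Rightarrow> bool" where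
  "chkg p [] = True"
| "chkg p (m#rest) = (chkf p rest m \<and> chkg (m#p) rest)"

lemma chkf_nth: "chkf ls rs m \<Longrightarrow> d < length ls \<Longrightarrow> d < length rs \<Longrightarrow> ls!d + rs!d \<noteq> 2*m"
proof (induction ls rs m arbitrary: d rule: chkf.induct)
  case (1 x ls y rs m)
  then show ?case by (cases d) auto
qed auto

lemma chkg_sound:
  "chkg p xs \<Longrightarrow> i<j \<Longrightarrow> j<k \<Longrightarrow> k < length p + length xs \<Longrightarrow> length p \<le> j \<Longrightarrow> i+k=2*j
   \<Longrightarrow> (rev p @ xs)!i + (rev p @ xs)!k \<noteq> 2*(rev p @ xs)!j"
proof (induction xs arbitrary: p j)
  case Nil
  then show ?case by simp
next
  case (Cons m rest)
  show ?case
  proof (cases "j = length p")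
    case True
    define d where "d = j - i - 1"
    have k: "k = length p + Suc d" using Cons.prems True d_def by simp
    have i: "i = length p - Suc d" using Cons.prems True d_def by simp
    have dl: "d < length p" "d < length rest" using Cons.prems True d_def by simp_all
    have "p!d + rest!d \<noteq> 2*m" using chkf_nth[OF _ dl] Cons.prems(1) by simp
    moreover have "(rev p @ m # rest)!i = p!d"
    proof -
      have il: "i < length p" using i dl by simp
      have "(rev p @ m # rest)!i = rev p ! i" using il by (simp add: nth_append)
      also have "\<dots> = p ! (length p - Suc i)" using il by (simp add: rev_nth)
      also have "length p - Suc i = d" using i dl by simp
      finally show ?thesis .
    qed
    moreover have "(rev p @ m # rest)!k = rest!d" using k by (simp add: nth_append)
    moreover have "(rev p @ m # rest)!j = m" using True by (simp add: nth_append)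
    ultimately show ?thesis by simp
  next
    case False
    have "(rev (m#p) @ rest)!i + (rev (m#p) @ rest)!k \<noteq> 2*(rev (m#p) @ rest)!j"
      using Cons.IH[of "m#p" j] Cons.prems False by simp
    then show ?thesis by simp
  qed
qed

lemma chkg_no3AP: "chkg [] xs \<Longrightarrow> \<not> has_double_3AP xs"
  unfolding has_double_3AP_def using chkg_sound[of "[]" xs] by fastforce

lemma has3AP_prefix: "has_double_3AP ys \<Longrightarrow> has_double_3AP (ys @ zs)"
  unfolding has_double_3AP_def
proof (elim exE conjE)
  fix i j k assume h: "i < j" "j < k" "k < length ys" "i + k = 2 * j" "ys ! i + ys ! k = 2 * ys ! j"
  then have "(ys@zs) ! i + (ys@zs) ! k = 2 * (ys@zs) ! j" by (simp add: nth_append)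
  with h show "\<exists>i j k. i < j \<and> j < k \<and> k < length (ys @ zs) \<and> i + k = 2 * j \<and>
              (ys @ zs) ! i + (ys @ zs) ! k = 2 * (ys @ zs) ! j" by (intro exI[of _ i] exI[of _ j] exI[of _ k]) simp
qed

lemma color_class_filter: "color_class c N a = filter (\<lambda>n. c n = a) [1..<Suc N]"
  unfolding color_class_def
  by (rule sym, rule sorted_distinct_set_unique) (auto simp del: upt_Suc intro: sorted_wrt_filter)

fun idx :: "nat \<Rightarrow> 'a list \<Rightarrow> (nat \<times> 'a) list" where
  "idx k [] = []"
| "idx k (c#cs) = (k,c) # idx (Suc k) cs"

lemma filter_idx:
  "filter (\<lambda>n. P (w!(n-k))) [k..<k+length w] = map fst (filter (\<lambda>p. P (snd p)) (idx k w))"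
proof (induction w arbitrary: k)
  case Nil
  then show ?case by simp
next
  case (Cons c cs)
  have e: "[k..<k+length (c#cs)] = k # [Suc k..<Suc k + length cs]"
    by (subst upt_conv_Cons) simp_all
  have f: "filter (\<lambda>n. P ((c#cs)!(n-k))) [Suc k..<Suc k + length cs]
      = filter (\<lambda>n. P (cs!(n- Suc k))) [Suc k..<Suc k + length cs]"
    by (rule filter_cong) (auto simp: nth_Cons')
  show ?case unfolding e
    apply (simp only: filter.simps idx.simps)
    using Cons.IH[of "Suc k"] f by simp
qed

definition L0 :: "nat list" where "L0 = [1, 3, 6, 10, 12, 13, 15, 18, 19, 21, 22, 29, 31, 32, 34, 37, 38, 40, 44, 51, 55, 66, 70, 71, 74, 75, 77, 80, 82, 87, 90, 91, 94, 96, 97, 99, 111, 112, 114, 115, 119, 124, 125, 128, 129, 131, 132, 135, 136, 140, 142, 143, 146, 148, 149, 156, 159, 160, 162, 163, 168, 170, 184, 186, 189, 191, 192, 195, 197, 200, 204, 206, 214, 215, 231, 232, 235, 236, 243, 244, 246, 249, 251, 252, 267, 268, 271, 272, 274, 277, 278, 281, 289, 290, 293, 295, 296, 301, 304, 305, 308, 310, 311, 316, 327, 328, 331, 335, 336, 339, 340, 342, 343, 346, 347, 354, 356, 357, 359, 362, 363, 365, 366, 371, 372, 374, 377, 378, 380, 387, 389, 392, 394, 395, 398, 402, 403, 408]"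

definition L1 :: "nat list" where "L1 = [2, 4, 5, 9, 11, 16, 20, 25, 28, 30, 33, 39, 41, 42, 45, 46, 48, 49, 54, 56, 57, 59, 62, 63, 69, 72, 73, 76, 83, 84, 98, 100, 103, 105, 106, 108, 113, 116, 117, 120, 122, 123, 126, 127, 138, 139, 144, 145, 147, 150, 151, 153, 154, 158, 164, 165, 167, 171, 172, 174, 175, 178, 179, 181, 185, 187, 188, 190, 193, 194, 196, 201, 207, 210, 211, 213, 217, 218, 221, 222, 224, 227, 228, 233, 234, 237, 238, 240, 253, 255, 258, 260, 261, 264, 269, 270, 273, 275, 276, 279, 283, 284, 286, 294, 297, 298, 312, 315, 319, 322, 323, 325, 326, 330, 332, 341, 344, 345, 350, 352, 353, 355, 358, 360, 361, 369, 370, 373, 375, 376, 379, 383, 385, 386, 401, 404, 405, 409, 410, 412, 413]"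

definition L2 :: "nat list" where "L2 = [7, 8, 14, 17, 23, 24, 26, 27, 35, 36, 43, 47, 50, 52, 53, 58, 60, 61, 64, 65, 67, 68, 78, 79, 81, 85, 86, 88, 89, 92, 93, 95, 101, 102, 104, 107, 109, 110, 118, 121, 130, 133, 134, 137, 141, 152, 155, 157, 161, 166, 169, 173, 176, 177, 180, 182, 183, 198, 199, 202, 203, 205, 208, 209, 212, 216, 219, 220, 223, 225, 226, 229, 230, 239, 241, 242, 245, 247, 248, 250, 254, 256, 257, 259, 262, 263, 265, 266, 280, 282, 285, 287, 288, 291, 292, 299, 300, 302, 303, 306, 307, 309, 313, 314, 317, 318, 320, 321, 324, 329, 333, 334, 337, 338, 348, 349, 351, 364, 367, 368, 381, 382, 384, 388, 390, 391, 393, 396, 397, 399, 400, 406, 407, 411]"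

lemma len: "length word413 = 413" by (simp add: word413_def)

lemma cls: "filter (\<lambda>n. col413 n = a) [1..<414] = map fst (filter (\<lambda>p. of_char (snd p) - 48 = a) (idx 1 word413))"
  using filter_idx[of "\<lambda>ch. of_char ch - 48 = a" word413 1] len
  by (simp add: col413_def)


definition w1 :: string where "w1 = ''0101102210100201200100221221010010220010112011211202210112122112202210''"

definition w2 :: string where "w2 = ''0110010220201122022002202001012212112122001001120121100110020022002110''"

definition w3 :: string where "w3 = ''2001101001121120210020011210201121122112122010110100110102201220201221''"

definition w4 :: string where "w4 = ''1210021122112122112200110011212200202202001212212112212200110010110012''"

definition w5 :: string where "w5 = ''0211212200220100112202200220200122102212211211002101220022001001100221''"

definition w6 :: string where "w6 = ''211010010110020022110010110010221211020220200220221001122011211''"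

lemma wsplit: "word413 = w1 @ w2 @ w3 @ w4 @ w5 @ w6"
  unfolding word413_def w1_def w2_def w3_def w4_def w5_def w6_def by (rule refl)

definition cl :: "nat \<Rightarrow> nat \<Rightarrow> string \<Rightarrow> nat list" where
  "cl a k w = map fst (filter (\<lambda>p. of_char (snd p) - 48 = a) (idx k w))"

lemma idx_app: "idx k (xs@ys) = idx k xs @ idx (k + length xs) ys"
  by (induction xs arbitrary: k) auto

lemma cl_app: "cl a k (xs@ys) = cl a k xs @ cl a (k + length xs) ys"
  unfolding cl_def by (simp add: idx_app)

lemma lenw1: "length w1 = 70" by (simp add: w1_def)

lemma allc1: "\<forall>ch\<in>set w1. of_char ch - 48 < (3::nat)" by (simp add: w1_def)

lemma lenw2: "length w2 = 70" by (simp add: w2_def)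

lemma allc2: "\<forall>ch\<in>set w2. of_char ch - 48 < (3::nat)" by (simp add: w2_def)

lemma lenw3: "length w3 = 70" by (simp add: w3_def)

lemma allc3: "\<forall>ch\<in>set w3. of_char ch - 48 < (3::nat)" by (simp add: w3_def)

lemma lenw4: "length w4 = 70" by (simp add: w4_def)

lemma allc4: "\<forall>ch\<in>set w4. of_char ch - 48 < (3::nat)" by (simp add: w4_def)

lemma lenw5: "length w5 = 70" by (simp add: w5_def)

lemma allc5: "\<forall>ch\<in>set w5. of_char ch - 48 < (3::nat)" by (simp add: w5_def)

lemma lenw6: "length w6 = 63" by (simp add: w6_def)

lemma allc6: "\<forall>ch\<in>set w6. of_char ch - 48 < (3::nat)" by (simp add: w6_def)

lemma clsplit: "cl a 1 word413 = cl a 1 w1 @ cl a 71 w2 @ cl a 141 w3 @ cl a 211 w4 @ cl a 281 w5 @ cl a 351 w6"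
  unfolding wsplit by (simp add: cl_app lenw1 lenw2 lenw3 lenw4 lenw5)

lemma chk0: "chkg [] L0" unfolding L0_def by simp

lemma cl0_1: "cl 0 1 w1 = [1, 3, 6, 10, 12, 13, 15, 18, 19, 21, 22, 29, 31, 32, 34, 37, 38, 40, 44, 51, 55, 66, 70]" by (simp add: cl_def w1_def)

lemma cl0_2: "cl 0 71 w2 = [71, 74, 75, 77, 80, 82, 87, 90, 91, 94, 96, 97, 99, 111, 112, 114, 115, 119, 124, 125, 128, 129, 131, 132, 135, 136, 140]" by (simp add: cl_def w2_def)

lemma cl0_3: "cl 0 141 w3 = [142, 143, 146, 148, 149, 156, 159, 160, 162, 163, 168, 170, 184, 186, 189, 191, 192, 195, 197, 200, 204, 206]" by (simp add: cl_def w3_def)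

lemma cl0_4: "cl 0 211 w4 = [214, 215, 231, 232, 235, 236, 243, 244, 246, 249, 251, 252, 267, 268, 271, 272, 274, 277, 278]" by (simp add: cl_def w4_def)

lemma cl0_5: "cl 0 281 w5 = [281, 289, 290, 293, 295, 296, 301, 304, 305, 308, 310, 311, 316, 327, 328, 331, 335, 336, 339, 340, 342, 343, 346, 347]" by (simp add: cl_def w5_def)

lemma cl0_6: "cl 0 351 w6 = [354, 356, 357, 359, 362, 363, 365, 366, 371, 372, 374, 377, 378, 380, 387, 389, 392, 394, 395, 398, 402, 403, 408]" by (simp add: cl_def w6_def)

lemma cls0: "map fst (filter (\<lambda>p. of_char (snd p) - 48 = (0::nat)) (idx 1 word413)) = L0"
  unfolding cl_def[symmetric] clsplit cl0_1 cl0_2 cl0_3 cl0_4 cl0_5 cl0_6 L0_def by simp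

lemma chk1: "chkg [] L1" unfolding L1_def by simp

lemma cl1_1: "cl 1 1 w1 = [2, 4, 5, 9, 11, 16, 20, 25, 28, 30, 33, 39, 41, 42, 45, 46, 48, 49, 54, 56, 57, 59, 62, 63, 69]" by (simp add: cl_def w1_def)

lemma cl1_2: "cl 1 71 w2 = [72, 73, 76, 83, 84, 98, 100, 103, 105, 106, 108, 113, 116, 117, 120, 122, 123, 126, 127, 138, 139]" by (simp add: cl_def w2_def)

lemma cl1_3: "cl 1 141 w3 = [144, 145, 147, 150, 151, 153, 154, 158, 164, 165, 167, 171, 172, 174, 175, 178, 179, 181, 185, 187, 188, 190, 193, 194, 196, 201, 207, 210]" by (simp add: cl_def w3_def)

lemma cl1_4: "cl 1 211 w4 = [211, 213, 217, 218, 221, 222, 224, 227, 228, 233, 234, 237, 238, 240, 253, 255, 258, 260, 261, 264, 269, 270, 273, 275, 276, 279]" by (simp add: cl_def w4_def)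

lemma cl1_5: "cl 1 281 w5 = [283, 284, 286, 294, 297, 298, 312, 315, 319, 322, 323, 325, 326, 330, 332, 341, 344, 345, 350]" by (simp add: cl_def w5_def)

lemma cl1_6: "cl 1 351 w6 = [352, 353, 355, 358, 360, 361, 369, 370, 373, 375, 376, 379, 383, 385, 386, 401, 404, 405, 409, 410, 412, 413]" by (simp add: cl_def w6_def)

lemma cls1: "map fst (filter (\<lambda>p. of_char (snd p) - 48 = (1::nat)) (idx 1 word413)) = L1"
  unfolding cl_def[symmetric] clsplit cl1_1 cl1_2 cl1_3 cl1_4 cl1_5 cl1_6 L1_def by simp

lemma chk2: "chkg [] L2" unfolding L2_def by simp

lemma cl2_1: "cl 2 1 w1 = [7, 8, 14, 17, 23, 24, 26, 27, 35, 36, 43, 47, 50, 52, 53, 58, 60, 61, 64, 65, 67, 68]" by (simp add: cl_def w1_def)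

lemma cl2_2: "cl 2 71 w2 = [78, 79, 81, 85, 86, 88, 89, 92, 93, 95, 101, 102, 104, 107, 109, 110, 118, 121, 130, 133, 134, 137]" by (simp add: cl_def w2_def)

lemma cl2_3: "cl 2 141 w3 = [141, 152, 155, 157, 161, 166, 169, 173, 176, 177, 180, 182, 183, 198, 199, 202, 203, 205, 208, 209]" by (simp add: cl_def w3_def)

lemma cl2_4: "cl 2 211 w4 = [212, 216, 219, 220, 223, 225, 226, 229, 230, 239, 241, 242, 245, 247, 248, 250, 254, 256, 257, 259, 262, 263, 265, 266, 280]" by (simp add: cl_def w4_def)

lemma cl2_5: "cl 2 281 w5 = [282, 285, 287, 288, 291, 292, 299, 300, 302, 303, 306, 307, 309, 313, 314, 317, 318, 320, 321, 324, 329, 333, 334, 337, 338, 348, 349]" by (simp add: cl_def w5_def)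

lemma cl2_6: "cl 2 351 w6 = [351, 364, 367, 368, 381, 382, 384, 388, 390, 391, 393, 396, 397, 399, 400, 406, 407, 411]" by (simp add: cl_def w6_def)

lemma cls2: "map fst (filter (\<lambda>p. of_char (snd p) - 48 = (2::nat)) (idx 1 word413)) = L2"
  unfolding cl_def[symmetric] clsplit cl2_1 cl2_2 cl2_3 cl2_4 cl2_5 cl2_6 L2_def by simp

lemma allchars: "\<forall>ch\<in>set word413. of_char ch - 48 < (3::nat)"
  unfolding wsplit set_append ball_Un using allc1 allc2 allc3 allc4 allc5 allc6 by blast

lemma colr: "is_coloring 3 413 col413"
  unfolding is_coloring_def
proof
  fix n :: nat assume "n \<in> {1..413}"
  then have "1 \<le> n" "n \<le> 413" by auto
  then have "n - 1 < length word413" using len by linarith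
  then have "word413 ! (n-1) \<in> set word413" by (rule nth_mem)
  then show "col413 n < 3" using allchars by (simp add: col413_def)
qed

lemma full_no: "\<not> has_double_3AP (filter (\<lambda>n. col413 n = a) [1..<414])"
proof (cases "a < 3")
  case True
  then have "a = 0 \<or> a = 1 \<or> a = 2" by auto
  then show ?thesis using cls chk0 chk1 chk2 cls0 cls1 cls2 chkg_no3AP by auto
next
  case False
  have "filter (\<lambda>n. col413 n = a) [1..<414] = []"
    using colr False unfolding is_coloring_def by (auto simp: filter_empty_conv simp del: upt_Suc)
  then show ?thesis by (simp add: has_double_3AP_def)
qed

lemma pre: "N \<le> 413 \<Longrightarrow> filter P [1..<414] = filter P [1..<Suc N] @ filter P [Suc N..<414]"
proof -
  assume "N \<le> 413"
  then have "[1..<Suc N + (413 - N)] = [1..<Suc N] @ [Suc N..<Suc N + (413 - N)]"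
    by (intro upt_add_eq_append) simp
  moreover have "Suc N + (413 - N) = 414" using \<open>N \<le> 413\<close> by simp
  ultimately show ?thesis by simp
qed

theorem theorem2:
  shows "length word413 = 413 \<and> is_coloring 3 413 col413 \<and> \<not> mono_double_3AP col413 413
         \<and> (\<forall>N < 414. \<exists>c. is_coloring 3 N c \<and> \<not> mono_double_3AP c N)"
proof -
  have nm: "\<not> mono_double_3AP col413 N" if "N \<le> 413" for N
  proof
    assume "mono_double_3AP col413 N"
    then obtain a where "has_double_3AP (filter (\<lambda>n. col413 n = a) [1..<Suc N])"
      unfolding mono_double_3AP_def color_class_filter by blast
    then have "has_double_3AP (filter (\<lambda>n. col413 n = a) [1..<414])"
      using pre[OF that, of "\<lambda>n. col413 n = a"] has3AP_prefix by metis
    then show False using full_no by blast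
  qed
  have ic: "is_coloring 3 N col413" if "N \<le> 413" for N
    using colr that unfolding is_coloring_def by auto
  have "\<forall>N < 414. \<exists>c. is_coloring 3 N c \<and> \<not> mono_double_3AP c N"
  proof (intro allI impI)
    fix N :: nat assume "N < 414"
    then have "N \<le> 413" by simp
    then show "\<exists>c. is_coloring 3 N c \<and> \<not> mono_double_3AP c N" using ic nm by blast
  qed
  then show ?thesis using len colr nm[of 413] by simp
qed

end
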